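(* Let $[Z_i(\tau_i,u_i)]_{i=1}^N$ be per-agent return distributions with quantile functions $\theta_i(\tau_i,u_i,\omega)$, let $k_1,\dots,k_N\ge0$ be constants not depending on the joint action $\boldsymbol u$, and let $Z_{jt}(\boldsymbol\tau,\boldsymbol u)$ be a joint return distribution (e.g. represented as a mixture of Dirac masses $\sum_{j=1}^J p_j(\boldsymbol\tau,\boldsymbol u,\omega_j)\delta_{\theta(\boldsymbol\tau,\boldsymbol u,\omega_j)}$) whose quantile function is $$\theta(\boldsymbol\tau,\boldsymbol u,\omega)=\sum_{i=1}^N k_i\,\theta_i(\tau_i,u_i,\omega),\qquad \omega\in(0,1].$$ Let $\psi_\alpha$ be either a Value-at-Risk metric $\mathrm{VaR}_\alpha$ or a distortion risk measure (e.g. CVaR, Wang, CPW). Then $[Z_i]_{i=1}^N$ satisfy the RIGM principle for $Z_{jt}$ with risk metric $\psi_\alpha$, i.e. $\arg\max_{\boldsymbol u}\psi_\alpha[Z_{jt}(\boldsymbol\tau,\boldsymbol u)]=(\arg\max_{u_1}\psi_\alpha[Z_1(\tau_1,u_1)],\dots,\arg\max_{u_N}\psi_\alpha[Z_N(\tau_N,u_N)])$.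
   Context: There are $N$ agents; agent $i$ has observation history $\tau_i$ and a finite action set $U_i$; $\boldsymbol\tau=(\tau_1,\dots,\tau_N)$, $\boldsymbol u=(u_1,\dots,u_N)$. For a real random variable $Z$ with CDF $F_Z$, its quantile function is $\theta_Z(\omega)=\inf\{z\in\mathbb{R}:\omega\le F_Z(z)\}$, $\omega\in(0,1]$. $\mathrm{VaR}_\alpha(Z)=\theta_Z(\alpha)$. A distortion risk measure with differentiable distortion function $g:[0,1]\to[0,1]$ is $\psi(Z)=\int_0^1 g'(\omega)\theta_Z(\omega)\,d\omega$ (integrals assumed finite); examples: CVaR with $g(\omega)=\min(\omega/\alpha,1)$, Wang with $g(\omega)=\Phi_{\mathcal N}(\Phi_{\mathcal N}^{-1}(\omega)+\alpha)$ ($\Phi_{\mathcal N}$ the standard Gaussian CDF), CPW with $g(\omega)=\omega^\alpha/(\omega^\alpha+(1-\omega)^\alpha)^{1/\alpha}$. RIGM principle: as in the displayed equality of the claim. Standing assumption of the paper: argmax sets are singletons (ties broken by smallest index). *)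

theory Defs
  imports "HOL-Probability.Probability"
begin

definition quantile :: "real measure \<Rightarrow> real \<Rightarrow> real" where
  "quantile M \<omega> = Inf {z. \<omega> \<le> measure M {..z}}"

definition VaR :: "real \<Rightarrow> real measure \<Rightarrow> real" where
  "VaR \<alpha> M = quantile M \<alpha>"

definition distortion_risk :: "(real \<Rightarrow> real) \<Rightarrow> real measure \<Rightarrow> real" where
  "distortion_risk g' M = (LBINT \<omega>=0..1. g' \<omega> * quantile M \<omega>)"

definition distortion_fun :: "(real \<Rightarrow> real) \<Rightarrow> (real \<Rightarrow> real) \<Rightarrow> bool" where
  "distortion_fun g g' \<longleftrightarrow> g ` {0..1} \<subseteq> {0..1} \<and>
     (\<forall>\<omega>\<in>{0..1}. (g has_real_derivative g' \<omega>) (at \<omega> within {0..1}))"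

definition argmax_set :: "('a \<Rightarrow> real) \<Rightarrow> 'a set \<Rightarrow> 'a set" where
  "argmax_set f A = {x \<in> A. \<forall>y\<in>A. f y \<le> f x}"

end

theory Submission
  imports Defs
begin

theorem theorem4:
  fixes N :: nat
    and U :: "nat \<Rightarrow> 'a set"
    and \<tau> :: "nat \<Rightarrow> 'o"
    and Z :: "nat \<Rightarrow> 'o \<Rightarrow> 'a \<Rightarrow> real measure"
    and Zjt :: "(nat \<Rightarrow> 'o) \<Rightarrow> (nat \<Rightarrow> 'a) \<Rightarrow> real measure"
    and k :: "nat \<Rightarrow> real"
    and \<psi> :: "real measure \<Rightarrow> real"
  assumes finU: "\<And>i. i < N \<Longrightarrow> finite (U i)"
    and distZ: "\<And>i a. i < N \<Longrightarrow> a \<in> U i \<Longrightarrow>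
                  prob_space (Z i (\<tau> i) a) \<and> sets (Z i (\<tau> i) a) = sets borel"
    and distZjt: "\<And>u. u \<in> PiE {..<N} U \<Longrightarrow>
                  prob_space (Zjt \<tau> u) \<and> sets (Zjt \<tau> u) = sets borel"
    and k_nonneg: "\<And>i. i < N \<Longrightarrow> k i \<ge> 0"
    and quant: "\<And>u \<omega>. u \<in> PiE {..<N} U \<Longrightarrow> \<omega> \<in> {0<..1} \<Longrightarrow>
                  quantile (Zjt \<tau> u) \<omega> = (\<Sum>i<N. k i * quantile (Z i (\<tau> i) (u i)) \<omega>)"
    and risk: "(\<exists>\<alpha>\<in>{0<..1}. \<psi> = VaR \<alpha>) \<or>
               (\<exists>g g'. distortion_fun g g' \<and> \<psi> = distortion_risk g' \<and>
                  (\<forall>i<N. \<forall>a\<in>U i. set_integrable lborel {0..1}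
                        (\<lambda>\<omega>. g' \<omega> * quantile (Z i (\<tau> i) a) \<omega>)) \<and>
                  (\<forall>u\<in>PiE {..<N} U. set_integrable lborel {0..1}
                        (\<lambda>\<omega>. g' \<omega> * quantile (Zjt \<tau> u) \<omega>)))"
    and single_jt: "\<exists>v. argmax_set (\<lambda>u. \<psi> (Zjt \<tau> u)) (PiE {..<N} U) = {v}"
    and single_i: "\<And>i. i < N \<Longrightarrow> \<exists>b. argmax_set (\<lambda>a. \<psi> (Z i (\<tau> i) a)) (U i) = {b}"
  shows "argmax_set (\<lambda>u. \<psi> (Zjt \<tau> u)) (PiE {..<N} U)
         = PiE {..<N} (\<lambda>i. argmax_set (\<lambda>a. \<psi> (Z i (\<tau> i) a)) (U i))"
proof -
  define f where "f i a = \<psi> (Z i (\<tau> i) a)" for i a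
  have lin: "\<psi> (Zjt \<tau> u) = (\<Sum>i<N. k i * f i (u i))" if u: "u \<in> PiE {..<N} U" for u
  proof (cases "\<exists>\<alpha>\<in>{0<..1}. \<psi> = VaR \<alpha>")
    case True
    then obtain \<alpha> where a: "\<alpha> \<in> {0<..1}" "\<psi> = VaR \<alpha>" by blast
    show ?thesis using quant[OF u a(1)] a(2) by (simp add: f_def VaR_def)
  next
    case False
    then obtain g g' where gg: "\<psi> = distortion_risk g'"
      and iZ: "\<forall>i<N. \<forall>a\<in>U i. set_integrable lborel {0..1}
                        (\<lambda>\<omega>. g' \<omega> * quantile (Z i (\<tau> i) a) \<omega>)"
      using risk by blast
    have ui: "u i \<in> U i" if "i < N" for i using u that by auto
    have iZ': "set_integrable lborel {0<..<1} (\<lambda>\<omega>. g' \<omega> * quantile (Z i (\<tau> i) (u i)) \<omega>)"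
      if "i < N" for i
      by (rule set_integrable_subset[OF iZ[rule_format, OF that ui[OF that]]]) auto
    have eqs: "distortion_risk g' M = (LINT \<omega>:{0<..<1}|lborel. g' \<omega> * quantile M \<omega>)" for M
      unfolding distortion_risk_def interval_lebesgue_integral_def
      using einterval_eq_Icc(1)[of 0 1] by (simp add: zero_ereal_def one_ereal_def)
    have "\<psi> (Zjt \<tau> u) = (LINT \<omega>:{0<..<1}|lborel. (\<Sum>i<N. k i * (g' \<omega> * quantile (Z i (\<tau> i) (u i)) \<omega>)))"
      unfolding gg eqs
      by (rule set_lebesgue_integral_cong) (auto simp: quant[OF u] sum_distrib_left algebra_simps)
    also have "\<dots> = (\<Sum>i<N. (LINT \<omega>:{0<..<1}|lborel. k i * (g' \<omega> * quantile (Z i (\<tau> i) (u i)) \<omega>)))"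
      unfolding set_lebesgue_integral_def
      apply (simp only: scaleR_sum_right)
      apply (subst Bochner_Integration.integral_sum)
      subgoal for i
      proof -
        assume "i \<in> {..<N}"
        then have "integrable lborel (\<lambda>x. indicat_real {0<..<1} x *\<^sub>R (g' x * quantile (Z i (\<tau> i) (u i)) x))"
          using iZ'[of i] unfolding set_integrable_def by simp
        then have "integrable lborel (\<lambda>x. k i * (indicat_real {0<..<1} x *\<^sub>R (g' x * quantile (Z i (\<tau> i) (u i)) x)))"
          by (rule integrable_mult_right)
        moreover have "(\<lambda>x. k i * (indicat_real {0<..<1} x *\<^sub>R (g' x * quantile (Z i (\<tau> i) (u i)) x)))
          = (\<lambda>x. indicat_real {0<..<1} x *\<^sub>R (k i * (g' x * quantile (Z i (\<tau> i) (u i)) x)))"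
          by (simp add: fun_eq_iff)
        ultimately show ?thesis by (simp only:)
      qed
      by simp
    also have "\<dots> = (\<Sum>i<N. k i * f i (u i))"
      unfolding f_def gg eqs by (simp only: set_integral_mult_right)
    finally show ?thesis .
  qed
  obtain v where v: "argmax_set (\<lambda>u. \<psi> (Zjt \<tau> u)) (PiE {..<N} U) = {v}" using single_jt by blast
  have "\<forall>i. \<exists>b. i < N \<longrightarrow> argmax_set (f i) (U i) = {b}" using single_i unfolding f_def[abs_def] by blast
  then obtain b where b0: "\<forall>i. i < N \<longrightarrow> argmax_set (f i) (U i) = {b i}"
    by (rule choice[THEN exE])
  have b: "\<And>i. i < N \<Longrightarrow> argmax_set (f i) (U i) = {b i}" using b0 by blast
  define b' where "b' = restrict b {..<N}"
  have bU: "b i \<in> U i" and bmax: "\<And>y. y \<in> U i \<Longrightarrow> f i y \<le> f i (b i)" if "i < N" for i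
    using b[OF that] unfolding argmax_set_def by blast+
  have b'P: "b' \<in> PiE {..<N} U" using bU by (auto simp: b'_def)
  have "b' \<in> argmax_set (\<lambda>u. \<psi> (Zjt \<tau> u)) (PiE {..<N} U)"
    unfolding argmax_set_def
  proof (intro CollectI conjI ballI b'P)
    fix y assume y: "y \<in> PiE {..<N} U"
    have "(\<Sum>i<N. k i * f i (y i)) \<le> (\<Sum>i<N. k i * f i (b' i))"
      apply (rule sum_mono)
      using bmax y k_nonneg by (auto simp: b'_def intro!: mult_left_mono)
    then show "\<psi> (Zjt \<tau> y) \<le> \<psi> (Zjt \<tau> b')" using lin[OF y] lin[OF b'P] by simp
  qed
  then have vb: "v = b'" using v by simp
  have "PiE {..<N} (\<lambda>i. argmax_set (\<lambda>a. \<psi> (Z i (\<tau> i) a)) (U i)) = PiE {..<N} (\<lambda>i. {b i})"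
    by (rule PiE_cong) (use b in \<open>simp only: f_def[abs_def] lessThan_iff\<close>)
  also have "\<dots> = {b'}"
  proof
    show "{b'} \<subseteq> PiE {..<N} (\<lambda>i. {b i})" by (auto simp: b'_def)
    show "PiE {..<N} (\<lambda>i. {b i}) \<subseteq> {b'}"
    proof
      fix x assume x: "x \<in> PiE {..<N} (\<lambda>i. {b i})"
      have "x = b'"
      proof
        fix i show "x i = b' i" using x by (cases "i < N") (auto simp: b'_def PiE_def extensional_def)
      qed
      then show "x \<in> {b'}" by simp
    qed
  qed
  finally show ?thesis using v vb by simp
qed

end
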